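(* Let $d\ge1$, $\sigma^2>0$, $p\in\mathbb{R}$, $\phi>0$, $\beta>0$, $\boldsymbol\lambda\in\mathbb{R}^d$ and $\boldsymbol\Lambda$ a $d\times d$ symmetric positive-definite matrix. For $\rho>0$ let $C(\mathbf{h},u;\rho)=E_{\mathbf{v}}[\sigma^2\exp\{-\|\mathbf{h}-\mathbf{v}u\|^2/\rho^2\}]$ with $\mathbf{v}\sim\mathcal{N}_d(\boldsymbol\lambda,\rho^2\boldsymbol\Lambda/2)$, and let $K(\mathbf{h},u)=E[C(\mathbf{h},u;\rho)]$ where $\rho^2\sim\mathrm{GIG}(p,\phi^2/2,2\beta^2)$. Then $$K(\mathbf{h},u)=\sigma^2\,|\mathbf{I}_d+u^2\boldsymbol\Lambda|^{-1/2}\,\frac{(1+h_u^2/\beta^2)^{p/2}}{\mathcal{K}_p(\phi\beta)}\,\mathcal{K}_p\big(\phi(h_u^2+\beta^2)^{1/2}\big),$$ where $h_u:=\{(\mathbf{h}-u\boldsymbol\lambda)^\top(u^2\boldsymbol\Lambda+\mathbf{I}_d)^{-1}(\mathbf{h}-u\boldsymbol\lambda)\}^{1/2}$.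
   Context: $X\sim\mathrm{GIG}(p,a,b)$ (generalized inverse Gaussian, $a>0,b>0,p\in\mathbb{R}$) means $X$ has density $\frac{(a/b)^{p/2}}{2\mathcal{K}_p(\sqrt{ab})}x^{p-1}\exp\{-\tfrac12(ax+b/x)\}$, $x>0$, where $\mathcal{K}_p$ is the modified Bessel function of the second kind of order $p$. $|\cdot|$ of a matrix denotes its determinant. *)

theory Defs
  imports "HOL-Analysis.Analysis"
begin

definition besselK :: "real \<Rightarrow> real \<Rightarrow> real" where
  "besselK p x = (LBINT t:{0..}. exp (- x * cosh t) * cosh (p * t))"

definition gig_density :: "real \<Rightarrow> real \<Rightarrow> real \<Rightarrow> real \<Rightarrow> real" where
  "gig_density p a b x =
     (if x > 0 then (a / b) powr (p / 2) / (2 * besselK p (sqrt (a * b)))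
        * x powr (p - 1) * exp (- (a * x + b / x) / 2) else 0)"

definition pos_def_matrix :: "real^'n^'n \<Rightarrow> bool" where
  "pos_def_matrix A \<longleftrightarrow> transpose A = A \<and> (\<forall>x. x \<noteq> 0 \<longrightarrow> x \<bullet> (A *v x) > 0)"

definition mvn_density :: "real^'n \<Rightarrow> real^'n^'n \<Rightarrow> real^'n \<Rightarrow> real" where
  "mvn_density mu S v =
     (2 * pi) powr (- real CARD('n) / 2) * det S powr (- 1 / 2)
       * exp (- ((v - mu) \<bullet> (matrix_inv S *v (v - mu))) / 2)"

definition mvn_expectation :: "real^'n \<Rightarrow> real^'n^'n \<Rightarrow> (real^'n \<Rightarrow> real) \<Rightarrow> real" where
  "mvn_expectation mu S f = (LINT v|lborel. mvn_density mu S v * f v)"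

definition cov_C :: "real \<Rightarrow> real^'n \<Rightarrow> real^'n^'n \<Rightarrow> real^'n \<Rightarrow> real \<Rightarrow> real \<Rightarrow> real" where
  "cov_C sigma2 lam Lam h u rho =
     mvn_expectation lam ((rho\<^sup>2 / 2) *\<^sub>R Lam)
       (\<lambda>v. sigma2 * exp (- (norm (h - u *\<^sub>R v))\<^sup>2 / rho\<^sup>2))"

definition cov_K :: "real \<Rightarrow> real^'n \<Rightarrow> real^'n^'n \<Rightarrow> real \<Rightarrow> real \<Rightarrow> real \<Rightarrow> real^'n \<Rightarrow> real \<Rightarrow> real" where
  "cov_K sigma2 lam Lam p phi beta h u =
     (LINT r|lborel. gig_density p (phi\<^sup>2 / 2) (2 * beta\<^sup>2) r * cov_C sigma2 lam Lam h u (sqrt r))"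

end

theory Submission
  imports Defs "HOL-Probability.Distributions"
begin

lemma det_shear_matrix:
  fixes m n :: "'n::finite"
  assumes "m \<noteq> n"
  shows "det (matrix (\<lambda>v::real^'n. \<chi> i. if i = m then v $ m + v $ n else v $ i)) = 1"
proof -
  have "matrix (\<lambda>v::real^'n. \<chi> i. if i = m then v $ m + v $ n else v $ i)
      = (\<chi> k. if k = m then row m (mat 1) + 1 *s row n (mat 1) else row k (mat 1 :: real^'n^'n))"
    by (auto simp: matrix_def vec_eq_iff row_def mat_def axis_def)
  then show ?thesis using det_row_operation[OF assms, of "mat 1 :: real^'n^'n" 1] by simp
qed

proposition
 fixes f :: "real^'n \<Rightarrow> real^'n"
  assumes "linear f" "S \<in> lmeasurable"
  shows measurable_linear_image': "(f ` S) \<in> lmeasurable"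
    and measure_linear_image': "measure lebesgue (f ` S) = \<bar>det (matrix f)\<bar> * measure lebesgue S" (is "?Q f S")
proof -
  have "\<forall>S \<in> lmeasurable. (f ` S) \<in> lmeasurable \<and> ?Q f S"
  proof (rule induct_linear_elementary [OF \<open>linear f\<close>]; intro ballI)
    fix f g and S :: "(real,'n) vec set"
    assume "linear f" and "linear g"
      and f [rule_format]: "\<forall>S \<in> lmeasurable. f ` S \<in> lmeasurable \<and> ?Q f S"
      and g [rule_format]: "\<forall>S \<in> lmeasurable. g ` S \<in> lmeasurable \<and> ?Q g S"
      and S: "S \<in> lmeasurable"
    then have gS: "g ` S \<in> lmeasurable"
      by blast
    show "(f \<circ> g) ` S \<in> lmeasurable \<and> ?Q (f \<circ> g) S"
      using f [OF gS] g [OF S] matrix_compose [OF \<open>linear g\<close> \<open>linear f\<close>]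
      by (simp add: o_def image_comp abs_mult det_mul)
  next
    fix f :: "real^'n::_ \<Rightarrow> real^'n::_" and i and S :: "(real^'n::_) set"
    assume "linear f" and 0: "\<And>x. f x $ i = 0" and "S \<in> lmeasurable"
    then have "\<not> inj f"
      by (metis (full_types) linear_injective_imp_surjective one_neq_zero surjE vec_component)
    have detf: "det (matrix f) = 0"
      using \<open>\<not> inj f\<close> det_nz_iff_inj[OF \<open>linear f\<close>] by blast
    show "f ` S \<in> lmeasurable \<and> ?Q f S"
    proof
      show "f ` S \<in> lmeasurable"
        using lmeasurable_iff_indicator_has_integral \<open>linear f\<close> \<open>\<not> inj f\<close> negligible_UNIV negligible_linear_singular_image by blast
      have "measure lebesgue (f ` S) = 0"
        by (meson \<open>\<not> inj f\<close> \<open>linear f\<close> negligible_imp_measure0 negligible_linear_singular_image)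
      also have "\<dots> = \<bar>det (matrix f)\<bar> * measure lebesgue S"
        by (simp add: detf)
      finally show "?Q f S" .
    qed
  next
    fix c and S :: "(real^'n::_) set"
    assume "S \<in> lmeasurable"
    show "(\<lambda>a. \<chi> i. c i * a $ i) ` S \<in> lmeasurable \<and> ?Q (\<lambda>a. \<chi> i. c i * a $ i) S"
    proof
      show "(\<lambda>a. \<chi> i. c i * a $ i) ` S \<in> lmeasurable"
        by (simp add: \<open>S \<in> lmeasurable\<close> measurable_stretch)
      show "?Q (\<lambda>a. \<chi> i. c i * a $ i) S"
        by (simp add: measure_stretch [OF \<open>S \<in> lmeasurable\<close>, of c] axis_def matrix_def det_diagonal)
    qed
  next
    fix m :: "'n" and n :: "'n" and S :: "(real, 'n) vec set"
    assume "m \<noteq> n" and "S \<in> lmeasurable"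
    let ?h = "\<lambda>v::(real, 'n) vec. \<chi> i. v $ Transposition.transpose m n i"
    have lin: "linear ?h"
      by (rule linearI) (simp_all add: plus_vec_def scaleR_vec_def)
    have meq: "measure lebesgue ((\<lambda>v::(real, 'n) vec. \<chi> i. v $ Transposition.transpose m n i) ` cbox a b)
             = measure lebesgue (cbox a b)" for a b
    proof (cases "cbox a b = {}")
      case True then show ?thesis
        by simp
    next
      case False
      then have him: "?h ` (cbox a b) \<noteq> {}"
        by blast
      have eq: "?h ` (cbox a b) = cbox (?h a) (?h b)"
        by (auto simp: image_iff lambda_swap_Galois mem_box_cart) (metis transpose_involutory)+
      show ?thesis
        using him prod.permute [OF permutes_swap_id, where S=UNIV and g="\<lambda>i. (b - a)$i", symmetric]
        by (simp add: eq content_cbox_cart False)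
    qed
    have "(\<chi> i j. if Transposition.transpose m n i = j then 1 else 0) = (\<chi> i j. if j = Transposition.transpose m n i then 1 else (0::real))"
      by (auto intro!: Cart_lambda_cong)
    then have "matrix ?h = transpose(\<chi> i j. mat 1 $ i $ Transposition.transpose m n j)"
      by (auto simp: matrix_eq transpose_def axis_def mat_def matrix_def)
    then have 1: "\<bar>det (matrix ?h)\<bar> = 1"
      by (simp add: det_permute_columns permutes_swap_id sign_swap_id abs_mult)
    show "?h ` S \<in> lmeasurable \<and> ?Q ?h S"
      using measure_linear_sufficient [OF lin \<open>S \<in> lmeasurable\<close>] meq 1 by force
  next
    fix m n :: "'n" and S :: "(real, 'n) vec set"
    assume "m \<noteq> n" and "S \<in> lmeasurable"
    let ?h = "\<lambda>v::(real, 'n) vec. \<chi> i. if i = m then v $ m + v $ n else v $ i"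
    have lin: "linear ?h"
      by (rule linearI) (auto simp: algebra_simps plus_vec_def scaleR_vec_def vec_eq_iff)
    have 1: "det(matrix ?h) = 1"
      by (rule det_shear_matrix[OF \<open>m \<noteq> n\<close>])
    have meq: "measure lebesgue (?h ` (cbox a b)) = measure lebesgue (cbox a b)" for a b
    proof (cases "cbox a b = {}")
      case True then show ?thesis by simp
    next
      case False
      then have ne: "(+) (\<chi> i. if i = n then - a $ n else 0) ` cbox a b \<noteq> {}"
        by auto
      let ?v = "\<chi> i. if i = n then - a $ n else 0"
      have "?h ` cbox a b
            = (+) (\<chi> i. if i = m \<or> i = n then a $ n else 0) ` ?h ` (+) ?v ` (cbox a b)"
        using \<open>m \<noteq> n\<close> unfolding image_comp o_def by (force simp: vec_eq_iff)
      then have "measure lebesgue (?h ` (cbox a b))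
               = measure lebesgue ((\<lambda>v. \<chi> i. if i = m then v $ m + v $ n else v $ i) `
                                   (+) ?v ` cbox a b)"
        by (rule ssubst) (rule measure_translation)
      also have "\<dots> = measure lebesgue ((\<lambda>v. \<chi> i. if i = m then v $ m + v $ n else v $ i) ` cbox (?v +a) (?v + b))"
        by (metis (no_types, lifting) cbox_translation)
      also have "\<dots> = measure lebesgue ((+) ?v ` cbox a b)"
        apply (subst measure_shear_interval)
        using \<open>m \<noteq> n\<close> ne apply auto
        apply (simp add: cbox_translation)
        by (metis cbox_borel cbox_translation measure_completion sets_lborel)
      also have "\<dots> = measure lebesgue (cbox a b)"
        by (rule measure_translation)
        finally show ?thesis .
      qed
    show "?h ` S \<in> lmeasurable \<and> ?Q ?h S"
      using measure_linear_sufficient [OF lin \<open>S \<in> lmeasurable\<close>] meq 1 by force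
  qed
  with assms show "(f ` S) \<in> lmeasurable" "?Q f S"
    by metis+
qed

lemma matrix_inv_both:
  fixes A :: "real^'n^'n"
  assumes "invertible A"
  shows "A ** matrix_inv A = mat 1" "matrix_inv A ** A = mat 1"
proof -
  have "\<exists>A'. A ** A' = mat 1 \<and> A' ** A = mat 1" using assms unfolding invertible_def by blast
  then have "A ** matrix_inv A = mat 1 \<and> matrix_inv A ** A = mat 1"
    unfolding matrix_inv_def by (rule someI_ex)
  then show "A ** matrix_inv A = mat 1" "matrix_inv A ** A = mat 1" by auto
qed

lemma matrix_inv_vec:
  fixes A :: "real^'n^'n"
  assumes "invertible A"
  shows "A *v (matrix_inv A *v x) = x" "matrix_inv A *v (A *v x) = x"
  by (simp_all add: matrix_vector_mul_assoc matrix_inv_both[OF assms])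

lemma det_matrix_inv:
  fixes A :: "real^'n^'n"
  assumes "invertible A"
  shows "det (matrix_inv A) = 1 / det A"
proof -
  have "det A * det (matrix_inv A) = 1"
    using det_mul[of A "matrix_inv A"] matrix_inv_both[OF assms] by simp
  moreover have "det A \<noteq> 0" using calculation by auto
  ultimately show ?thesis by (simp add: eq_divide_eq mult.commute)
qed

lemma lborel_linear:
  fixes A :: "real^'n^'n"
  assumes "invertible A"
  shows "lborel = density (distr lborel borel (\<lambda>x. A *v x)) (\<lambda>_. ennreal \<bar>det A\<bar>)"
proof (rule lborel_eqI)
  fix l u :: "real^'n" assume le: "\<And>b. b \<in> Basis \<Longrightarrow> l \<bullet> b \<le> u \<bullet> b"
  have [measurable]: "(\<lambda>x. A *v x) \<in> borel \<rightarrow>\<^sub>M borel"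
    by (intro borel_measurable_continuous_onI linear_continuous_on) (simp add: linear_linear[symmetric] matrix_vector_mul_linear_gen)
  let ?g = "\<lambda>x. matrix_inv A *v x"
  have pre: "(\<lambda>x. A *v x) -` box l u = ?g ` box l u"
    using matrix_inv_vec[OF assms] by (auto simp: image_iff) (metis)
  have lin: "linear ?g" by simp
  have bl: "box l u \<in> lmeasurable" by simp
  have m1: "?g ` box l u \<in> lmeasurable" by (rule measurable_linear_image'[OF lin bl])
  have m2: "measure lebesgue (?g ` box l u) = \<bar>det (matrix_inv A)\<bar> * measure lebesgue (box l u)"
    using measure_linear_image'[OF lin bl] by (simp add: matrix_of_matrix_vector_mul)
  have sb: "?g ` box l u \<in> sets borel"
    unfolding pre[symmetric] using measurable_sets_borel[of "\<lambda>x. A *v x" borel "box l u"] by simp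
  have "emeasure lborel (?g ` box l u) = emeasure lebesgue (?g ` box l u)"
    using sb by simp
  also have "\<dots> = measure lebesgue (?g ` box l u)"
    using m1 by (simp add: emeasure_eq_measure2)
  finally have e: "emeasure lborel (?g ` box l u) = \<bar>det (matrix_inv A)\<bar> * measure lebesgue (box l u)"
    using m2 by simp
  have dA: "det A \<noteq> 0" using assms invertible_det_nz by blast
  have mb: "measure lebesgue (box l u) = (\<Prod>b\<in>Basis. (u - l) \<bullet> b)"
    using le by (simp add: measure_lborel_box_eq) 
  show "emeasure (density (distr lborel borel (\<lambda>x. A *v x)) (\<lambda>_. ennreal \<bar>det A\<bar>)) (box l u) = (\<Prod>b\<in>Basis. (u - l) \<bullet> b)"
    using e dA mb le
    by (simp add: emeasure_density emeasure_distr pre nn_integral_cmult_indicator sb det_matrix_inv[OF assms] 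
        ennreal_mult'[symmetric] abs_mult prod_nonneg abs_divide)
qed simp

lemma nn_integral_linear:
  fixes A :: "real^'n^'n" and f :: "real^'n \<Rightarrow> ennreal"
  assumes "invertible A" and [measurable]: "f \<in> borel_measurable borel"
  shows "(\<integral>\<^sup>+x. f x \<partial>lborel) = \<bar>det A\<bar> * (\<integral>\<^sup>+x. f (A *v x) \<partial>lborel)"
proof -
  have [measurable]: "(\<lambda>x. A *v x) \<in> borel \<rightarrow>\<^sub>M borel"
    by (intro borel_measurable_continuous_onI linear_continuous_on) (simp add: linear_linear[symmetric] matrix_vector_mul_linear_gen)
  show ?thesis
    by (subst lborel_linear[OF assms(1)])
       (simp add: nn_integral_density nn_integral_distr nn_integral_cmult)
qed

lemma lborel_integrable_linear:
  fixes A :: "real^'n^'n" and f :: "real^'n \<Rightarrow> real"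
  assumes "invertible A" and f: "integrable lborel f"
  shows "integrable lborel (\<lambda>x. f (A *v x))"
proof -
  have [measurable]: "(\<lambda>x. A *v x) \<in> borel \<rightarrow>\<^sub>M borel"
    by (intro borel_measurable_continuous_onI linear_continuous_on) (simp add: linear_linear[symmetric] matrix_vector_mul_linear_gen)
  have dA: "det A \<noteq> 0" using assms invertible_det_nz by blast
  show ?thesis
  using f f[THEN borel_measurable_integrable] dA unfolding integrable_iff_bounded
  by (subst (asm) nn_integral_linear[OF assms(1)]) (auto simp: ennreal_mult_less_top)
qed

lemma invertible_matrix_inv:
  fixes A :: "real^'n^'n"
  assumes "invertible A" shows "invertible (matrix_inv A)"
  using matrix_inv_both[OF assms] unfolding invertible_def by blast

lemma lborel_integrable_linear_iff:
  fixes A :: "real^'n^'n" and f :: "real^'n \<Rightarrow> real"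
  assumes "invertible A"
  shows "integrable lborel (\<lambda>x. f (A *v x)) \<longleftrightarrow> integrable lborel f"
  using lborel_integrable_linear[OF assms, of f]
    lborel_integrable_linear[OF invertible_matrix_inv[OF assms], of "\<lambda>x. f (A *v x)"]
  by (auto simp: matrix_inv_vec[OF assms])

lemma lborel_integral_linear:
  fixes A :: "real^'n^'n" and f :: "real^'n \<Rightarrow> real"
  assumes "invertible A"
  shows "(\<integral>x. f x \<partial>lborel) = \<bar>det A\<bar> * (\<integral>x. f (A *v x) \<partial>lborel)"
proof cases
  have [measurable]: "(\<lambda>x. A *v x) \<in> borel \<rightarrow>\<^sub>M borel"
    by (intro borel_measurable_continuous_onI linear_continuous_on) (simp add: linear_linear[symmetric] matrix_vector_mul_linear_gen)
  assume f[measurable]: "integrable lborel f" then show ?thesis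
    using f f[THEN borel_measurable_integrable] lborel_integrable_linear[OF assms f]
    by (subst lborel_linear[OF assms]) (simp add: integral_density integral_distr)
next
  assume "\<not> integrable lborel f" with assms show ?thesis
    by (simp add: lborel_integrable_linear_iff not_integrable_integral_eq)
qed

lemma lborel_has_bochner_integral_linear_iff:
  fixes A :: "real^'n^'n" and f :: "real^'n \<Rightarrow> real"
  assumes "invertible A"
  shows "has_bochner_integral lborel f I \<longleftrightarrow> has_bochner_integral lborel (\<lambda>x. \<bar>det A\<bar> * f (A *v x)) I"
proof -
  have dA: "det A \<noteq> 0" using assms invertible_det_nz by blast
  show ?thesis
    unfolding has_bochner_integral_iff
    using lborel_integrable_linear_iff[OF assms, of f] lborel_integral_linear[OF assms, of f] dA
    by (auto simp: integrable_mult_right_iff)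
qed

lemma nn_integral_translate:
  fixes c :: "real^'n" and f :: "real^'n \<Rightarrow> ennreal"
  assumes [measurable]: "f \<in> borel_measurable borel"
  shows "(\<integral>\<^sup>+x. f x \<partial>lborel) = (\<integral>\<^sup>+x. f (c + x) \<partial>lborel)"
  by (subst lborel_distr_plus[symmetric, of c]) (simp add: nn_integral_distr)

lemma lborel_integrable_translate:
  fixes c :: "real^'n" and f :: "real^'n \<Rightarrow> real"
  assumes f: "integrable lborel f"
  shows "integrable lborel (\<lambda>x. f (c + x))"
  using f f[THEN borel_measurable_integrable] unfolding integrable_iff_bounded
  by (subst (asm) nn_integral_translate[of _ c]) auto

lemma lborel_integrable_translate_iff:
  fixes c :: "real^'n" and f :: "real^'n \<Rightarrow> real"
  shows "integrable lborel (\<lambda>x. f (c + x)) \<longleftrightarrow> integrable lborel f"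
  using lborel_integrable_translate[of f c] lborel_integrable_translate[of "\<lambda>x. f (c + x)" "-c"]
  by auto

lemma lborel_integral_translate:
  fixes c :: "real^'n" and f :: "real^'n \<Rightarrow> real"
  shows "(\<integral>x. f x \<partial>lborel) = (\<integral>x. f (c + x) \<partial>lborel)"
proof cases
  assume f[measurable]: "integrable lborel f" then show ?thesis
    using f f[THEN borel_measurable_integrable]
    by (subst lborel_distr_plus[symmetric, of c]) (simp add: integral_distr)
next
  assume "\<not> integrable lborel f" then show ?thesis
    by (simp add: lborel_integrable_translate_iff not_integrable_integral_eq)
qed

lemma lborel_has_bochner_integral_translate_iff:
  fixes c :: "real^'n" and f :: "real^'n \<Rightarrow> real"
  shows "has_bochner_integral lborel f I \<longleftrightarrow> has_bochner_integral lborel (\<lambda>x. f (c + x)) I"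
  unfolding has_bochner_integral_iff
  using lborel_integrable_translate_iff[of f c] lborel_integral_translate[of f c] by auto

lemma gauss1_has_integral: "has_bochner_integral lborel (\<lambda>x::real. exp (- x\<^sup>2 / 2)) (sqrt (2 * pi))"
proof -
  have "has_bochner_integral lborel (\<lambda>x. sqrt (2 * pi) * std_normal_density x) (sqrt (2 * pi) * 1)"
    by (intro has_bochner_integral_mult_right) (simp add: has_bochner_integral_iff)
  moreover have "(\<lambda>x. sqrt (2 * pi) * std_normal_density x) = (\<lambda>x::real. exp (- x\<^sup>2 / 2))"
    by (auto simp: std_normal_density_def)
  ultimately show ?thesis by simp
qed

lemma gauss1_nn: "(\<integral>\<^sup>+x. ennreal (exp (- x\<^sup>2 / 2)) \<partial>lborel) = ennreal (sqrt (2 * pi))"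
  using gauss1_has_integral
  by (subst nn_integral_eq_integral) (auto simp: has_bochner_integral_iff)

lemma gaussn_has_integral:
  "has_bochner_integral lborel (\<lambda>w::real^'n. exp (- (norm w)\<^sup>2 / 2)) (sqrt (2 * pi) ^ CARD('n))"
proof (rule has_bochner_integral_nn_integral)
  show "(\<lambda>w::real^'n. exp (- (norm w)\<^sup>2 / 2)) \<in> borel_measurable lborel" by measurable
  show "AE x in lborel. 0 \<le> exp (- (norm (x::real^'n))\<^sup>2 / 2)" by simp
  show "0 \<le> sqrt (2 * pi) ^ CARD('n)" by simp
  have eq: "exp (- (norm w)\<^sup>2 / 2) = (\<Prod>b\<in>Basis. exp (- (w \<bullet> b)\<^sup>2 / 2))" for w :: "real^'n"
  proof -
    have "(norm w)\<^sup>2 = (\<Sum>b\<in>Basis. (w \<bullet> b)\<^sup>2)"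
      by (metis (no_types) power2_norm_eq_inner euclidean_inner power2_eq_square sum.cong)
    then have "- (norm w)\<^sup>2 / 2 = (\<Sum>b\<in>Basis. - (w \<bullet> b)\<^sup>2 / 2)"
      by (simp add: sum_divide_distrib sum_negf)
    then show ?thesis by (simp add: exp_sum)
  qed
  have "(\<integral>\<^sup>+w. ennreal (exp (- (norm (w::real^'n))\<^sup>2 / 2)) \<partial>lborel)
      = (\<integral>\<^sup>+w. (\<Prod>b\<in>Basis. ennreal (exp (- ((w::real^'n) \<bullet> b)\<^sup>2 / 2))) \<partial>lborel)"
  proof -
    have "(\<lambda>w::real^'n. ennreal (exp (- (norm w)\<^sup>2 / 2))) = (\<lambda>w. (\<Prod>b\<in>Basis. ennreal (exp (- (w \<bullet> b)\<^sup>2 / 2))))"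
    proof
      fix w :: "real^'n"
      show "ennreal (exp (- (norm w)\<^sup>2 / 2)) = (\<Prod>b\<in>Basis. ennreal (exp (- (w \<bullet> b)\<^sup>2 / 2)))"
        by (subst eq) (rule prod_ennreal[symmetric], simp)
    qed
    then show ?thesis by (simp only:)
  qed
  also have "\<dots> = (\<Prod>b\<in>(Basis::(real^'n) set). (\<integral>\<^sup>+x. ennreal (exp (- x\<^sup>2 / 2)) \<partial>lborel))"
    by (rule nn_integral_lborel_prod) auto
  also have "\<dots> = (\<Prod>b\<in>(Basis::(real^'n) set). ennreal (sqrt (2 * pi)))"
    by (simp only: gauss1_nn)
  also have "\<dots> = ennreal (sqrt (2 * pi) ^ CARD('n))"
    by (simp add: ennreal_power)
  finally show "(\<integral>\<^sup>+w. ennreal (exp (- (norm (w::real^'n))\<^sup>2 / 2)) \<partial>lborel) = ennreal (sqrt (2 * pi) ^ CARD('n))" .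
qed

lemma inner_mat: "(x::real^'n) \<bullet> (A *v y) = (transpose A *v x) \<bullet> (y::real^'m)"
  by (metis dot_lmul_matrix transpose_matrix_vector transpose_transpose)

lemma sym_form:
  fixes M :: "real^'n^'n"
  assumes "transpose M = M"
  shows "x \<bullet> (M *v y) = y \<bullet> (M *v x)"
  using inner_mat[of x M y] assms by (simp add: inner_commute)

lemma Morth_basis_aux:
  fixes M :: "real^'n^'n"
  assumes pd: "pos_def_matrix M"
  shows "subspace S \<Longrightarrow> dim S = k \<Longrightarrow> \<exists>B. B \<subseteq> S \<and> finite B \<and> card B = k \<and> 0 \<notin> B \<and>
           (\<forall>x\<in>B. \<forall>y\<in>B. x \<noteq> y \<longrightarrow> x \<bullet> (M *v y) = 0)"
proof (induction k arbitrary: S)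
  case 0
  then show ?case by (intro exI[of _ "{}"]) auto
next
  case (Suc k)
  have sym: "transpose M = M" and pos: "\<And>x. x \<noteq> 0 \<Longrightarrow> x \<bullet> (M *v x) > 0"
    using pd unfolding pos_def_matrix_def by auto
  have "\<not> S \<subseteq> {0}" using Suc.prems(2) dim_eq_0[of S] by simp
  then obtain x where xS: "x \<in> S" and x0: "x \<noteq> 0" by blast
  define S' where "S' = {y \<in> S. y \<bullet> (M *v x) = 0}"
  have sub': "subspace S'"
    unfolding subspace_def
  proof (intro conjI ballI allI)
    show "0 \<in> S'" unfolding S'_def using subspace_0[OF Suc.prems(1)] by simp
    fix u v assume "u \<in> S'" "v \<in> S'"
    then show "u + v \<in> S'" unfolding S'_def using subspace_add[OF Suc.prems(1)] by (simp add: inner_add_left)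
  next
    fix c :: real and u assume "u \<in> S'"
    then show "c *\<^sub>R u \<in> S'" unfolding S'_def using subspace_scale[OF Suc.prems(1)] by simp
  qed
  have xS': "x \<notin> S'" using pos[OF x0] unfolding S'_def by auto
  have S'S: "S' \<subseteq> S" unfolding S'_def by auto
  have span1: "span (insert x S') \<subseteq> S"
    using S'S xS Suc.prems(1) by (simp add: span_minimal)
  have span2: "S \<subseteq> span (insert x S')"
  proof
    fix y assume yS: "y \<in> S"
    define c where "c = (y \<bullet> (M *v x)) / (x \<bullet> (M *v x))"
    have "y - c *\<^sub>R x \<in> S'"
      unfolding S'_def using yS xS Suc.prems(1) pos[OF x0]
      by (auto simp: c_def inner_diff_left subspace_diff subspace_scale)
    then have "y - c *\<^sub>R x \<in> span (insert x S')" by (simp add: span_base)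
    moreover have "c *\<^sub>R x \<in> span (insert x S')" by (simp add: span_base span_mul)
    ultimately have "(y - c *\<^sub>R x) + c *\<^sub>R x \<in> span (insert x S')" by (rule span_add)
    then show "y \<in> span (insert x S')" by simp
  qed
  have "S = span (insert x S')" by (rule subset_antisym[OF span2 span1])
  then have "dim S = dim (insert x S')" by (metis dim_span)
  also have "\<dots> = dim S' + 1"
  proof -
    have spS': "span S' = S'" using sub' by simp
    show ?thesis using xS' by (simp add: dim_insert spS')
  qed
  finally have "dim S' = k" using Suc.prems(2) by simp
  then obtain B' where B': "B' \<subseteq> S'" "finite B'" "card B' = k" "0 \<notin> B'"
      "\<forall>x\<in>B'. \<forall>y\<in>B'. x \<noteq> y \<longrightarrow> x \<bullet> (M *v y) = 0"
    using Suc.IH[OF sub'] by blast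
  have xB': "x \<notin> B'" using B'(1) xS' by auto
  show ?case
  proof (intro exI[of _ "insert x B'"] conjI)
    show "insert x B' \<subseteq> S" using B'(1) S'S xS by auto
    show "finite (insert x B')" using B'(2) by simp
    show "card (insert x B') = Suc k" using B'(2,3) xB' by simp
    show "0 \<notin> insert x B'" using B'(4) x0 by auto
    show "\<forall>u\<in>insert x B'. \<forall>v\<in>insert x B'. u \<noteq> v \<longrightarrow> u \<bullet> (M *v v) = 0"
    proof (intro ballI impI)
      fix u v assume u: "u \<in> insert x B'" and v: "v \<in> insert x B'" and uv: "u \<noteq> v"
      have o: "w \<bullet> (M *v x) = 0" if "w \<in> B'" for w using that B'(1) unfolding S'_def by auto
      show "u \<bullet> (M *v v) = 0"
      proof (cases "u = x")
        case True
        then have "v \<in> B'" using v uv by auto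
        then show ?thesis using o[of v] sym_form[OF sym, of x v] True by simp
      next
        case False
        then have uB: "u \<in> B'" using u by auto
        show ?thesis
        proof (cases "v = x")
          case True then show ?thesis using o[OF uB] by simp
        next
          case False then show ?thesis using uB v uv B'(5) by auto
        qed
      qed
    qed
  qed
qed

lemma quad_matrix:
  fixes P M :: "real^'n^'n"
  shows "(transpose P ** M ** P) $ i $ j = column i P \<bullet> (M *v column j P)"
  apply (simp add: matrix_matrix_mult_def matrix_vector_mult_def inner_vec_def column_def transpose_def sum_distrib_left sum_distrib_right)
  apply (subst sum.swap)
  apply (simp add: mult_ac)
  done

lemma pd_factor:
  fixes M :: "real^'n^'n"
  assumes pd: "pos_def_matrix M"
  shows "\<exists>P::real^'n^'n. transpose P ** M ** P = mat 1"
proof -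
  have sym: "transpose M = M" and pos: "\<And>x. x \<noteq> 0 \<Longrightarrow> x \<bullet> (M *v x) > 0"
    using pd unfolding pos_def_matrix_def by auto
  have "dim (UNIV :: (real^'n) set) = CARD('n)" by simp
  then obtain B :: "(real^'n) set" where B: "finite B" "card B = CARD('n)" "0 \<notin> B"
      "\<forall>x\<in>B. \<forall>y\<in>B. x \<noteq> y \<longrightarrow> x \<bullet> (M *v y) = 0"
    using Morth_basis_aux[OF pd subspace_UNIV] by blast
  obtain e where e: "bij_betw e (UNIV::'n set) B"
    using finite_same_card_bij[of "UNIV::'n set" B] B(1,2) by auto
  have eB: "e j \<in> B" for j using e by (auto simp: bij_betw_def)
  have einj: "e i = e j \<Longrightarrow> i = j" for i j using e by (auto simp: bij_betw_def inj_on_def)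
  define s where "s j = sqrt (e j \<bullet> (M *v e j))" for j
  have ep: "e j \<bullet> (M *v e j) > 0" for j
  proof -
    have "e j \<noteq> 0" using eB[of j] B(3) by auto
    then show ?thesis using pos by blast
  qed
  have spos: "s j > 0" for j
    unfolding s_def using ep[of j] by simp
  have s2: "s j * s j = e j \<bullet> (M *v e j)" for j
    unfolding s_def using ep[of j] by (simp add: real_sqrt_mult_self)
  define P :: "real^'n^'n" where "P = (\<chi> i j. e j $ i / s j)"
  have col: "column j P = (1 / s j) *\<^sub>R e j" for j
    by (simp add: P_def column_def vec_eq_iff)
  have "transpose P ** M ** P = mat 1"
  proof (rule vec_eq_iff[THEN iffD2, OF allI], rule vec_eq_iff[THEN iffD2, OF allI])
    fix i j
    have "(transpose P ** M ** P) $ i $ j = (1 / s i) * (1 / s j) * (e i \<bullet> (M *v e j))"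
      by (simp add: quad_matrix col matrix_vector_mult_scaleR)
    also have "\<dots> = mat 1 $ i $ j"
    proof (cases "i = j")
      case True
      then show ?thesis using s2[of j] spos[of j] ep[of j] by (simp add: mat_def field_simps)
    next
      case False
      then have "e i \<noteq> e j" using einj by blast
      then show ?thesis using B(4) eB[of i] eB[of j] False by (simp add: mat_def)
    qed
    finally show "(transpose P ** M ** P) $ i $ j = mat 1 $ i $ j" .
  qed
  then show ?thesis by (rule exI)
qed

lemma pd_factor_props:
  fixes M P :: "real^'n^'n"
  assumes eq: "transpose P ** M ** P = mat 1"
  shows "invertible P" "det P ^ 2 * det M = 1" "det M > 0"
    "\<And>w. (P *v w) \<bullet> (M *v (P *v w)) = w \<bullet> w"
proof -
  have "det (transpose P ** M ** P) = 1" using eq by simp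
  then show d: "det P ^ 2 * det M = 1" by (simp add: det_mul det_transpose power2_eq_square mult_ac)
  then have dP: "det P \<noteq> 0" by (cases "det P = 0") auto
  then show "invertible P" by (simp add: invertible_det_nz)
  have "det P ^ 2 > 0" using dP by simp
  then show "det M > 0" using d by (metis zero_less_mult_pos zero_less_one)
  fix w :: "real^'n"
  have "w \<bullet> w = w \<bullet> ((transpose P ** M ** P) *v w)" using eq by simp
  also have "\<dots> = w \<bullet> (transpose P *v (M *v (P *v w)))" by (simp add: matrix_vector_mul_assoc matrix_mul_assoc)
  also have "\<dots> = (P *v w) \<bullet> (M *v (P *v w))" using inner_mat[of w "transpose P" "M *v (P *v w)"] by (simp only: transpose_transpose)
  finally show "(P *v w) \<bullet> (M *v (P *v w)) = w \<bullet> w" by simp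
qed

lemma gauss_pd0:
  fixes M :: "real^'n^'n"
  assumes pd: "pos_def_matrix M"
  shows "has_bochner_integral lborel (\<lambda>y. exp (- (y \<bullet> (M *v y)) / 2))
           (sqrt (2 * pi) ^ CARD('n) / sqrt (det M))"
proof -
  obtain P :: "real^'n^'n" where eq: "transpose P ** M ** P = mat 1" using pd_factor[OF pd] by blast
  note props = pd_factor_props[OF eq]
  have absP: "\<bar>det P\<bar> = 1 / sqrt (det M)"
  proof -
    have "\<bar>det P\<bar> * sqrt (det M) = sqrt (det P ^ 2 * det M)"
      using props(3) by (simp add: real_sqrt_mult)
    also have "\<dots> = 1" using props(2) by simp
    finally show ?thesis using props(3) by (simp add: field_simps)
  qed
  have "has_bochner_integral lborel (\<lambda>w::real^'n. \<bar>det P\<bar> * exp (- (norm w)\<^sup>2 / 2)) (\<bar>det P\<bar> * sqrt (2 * pi) ^ CARD('n))"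
    by (intro has_bochner_integral_mult_right gaussn_has_integral)
  moreover have "(\<lambda>w::real^'n. \<bar>det P\<bar> * exp (- (norm w)\<^sup>2 / 2)) = (\<lambda>w. \<bar>det P\<bar> * exp (- ((P *v w) \<bullet> (M *v (P *v w))) / 2))"
    by (simp add: props(4) power2_norm_eq_inner)
  ultimately have "has_bochner_integral lborel (\<lambda>y. exp (- (y \<bullet> (M *v y)) / 2)) (\<bar>det P\<bar> * sqrt (2 * pi) ^ CARD('n))"
    using lborel_has_bochner_integral_linear_iff[OF props(1), of "\<lambda>y. exp (- (y \<bullet> (M *v y)) / 2)"] by simp
  then show ?thesis by (simp add: absP)
qed

lemma gauss_pd:
  fixes M :: "real^'n^'n" and b c :: "real^'n"
  assumes pd: "pos_def_matrix M" and Mc: "M *v c = b"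
  shows "has_bochner_integral lborel (\<lambda>x. exp (- (x \<bullet> (M *v x)) / 2 + b \<bullet> x))
           (sqrt (2 * pi) ^ CARD('n) / sqrt (det M) * exp ((b \<bullet> c) / 2))"
proof -
  have sym: "transpose M = M" using pd unfolding pos_def_matrix_def by auto
  have pt: "exp (- ((c + y) \<bullet> (M *v (c + y))) / 2 + b \<bullet> (c + y)) = exp (- (y \<bullet> (M *v y)) / 2) * exp ((b \<bullet> c) / 2)" for y
  proof -
    have s: "c \<bullet> (M *v y) = y \<bullet> b" using sym_form[OF sym, of c y] Mc by simp
    have "- ((c + y) \<bullet> (M *v (c + y))) / 2 + b \<bullet> (c + y) = - (y \<bullet> (M *v y)) / 2 + (b \<bullet> c) / 2"
      using s Mc by (simp add: matrix_vector_right_distrib inner_add_left inner_add_right inner_commute field_simps)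
    then show ?thesis by (simp only: exp_add[symmetric])
  qed
  have "has_bochner_integral lborel (\<lambda>y. exp (- (y \<bullet> (M *v y)) / 2) * exp ((b \<bullet> c) / 2))
           (sqrt (2 * pi) ^ CARD('n) / sqrt (det M) * exp ((b \<bullet> c) / 2))"
    by (intro has_bochner_integral_mult_left gauss_pd0[OF pd])
  then show ?thesis
    using lborel_has_bochner_integral_translate_iff[of "\<lambda>x. exp (- (x \<bullet> (M *v x)) / 2 + b \<bullet> x)" _ c]
    by (simp only: pt)
qed

lemma transpose_add': "transpose (A + B) = transpose A + transpose (B::real^'n^'m)"
  by (simp add: transpose_def vec_eq_iff)

lemma matrix_inv_unique:
  fixes A B :: "real^'n^'n"
  assumes "A ** B = mat 1"
  shows "invertible A" "matrix_inv A = B"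
proof -
  have BA: "B ** A = mat 1" using assms matrix_left_right_inverse by blast
  show inv: "invertible A" unfolding invertible_def using assms BA by blast
  have "matrix_inv A = (B ** A) ** matrix_inv A" using BA by simp
  also have "\<dots> = B ** (A ** matrix_inv A)" by (simp add: matrix_mul_assoc)
  also have "\<dots> = B" using matrix_inv_both[OF inv] by simp
  finally show "matrix_inv A = B" .
qed

lemma transpose_matrix_inv:
  fixes A :: "real^'n^'n"
  assumes "invertible A"
  shows "transpose (matrix_inv A) = matrix_inv (transpose A)"
proof -
  have "transpose A ** transpose (matrix_inv A) = mat 1"
    using matrix_inv_both[OF assms] by (metis matrix_transpose_mul transpose_mat)
  then show ?thesis using matrix_inv_unique by metis
qed

lemma pd_invertible:
  fixes S :: "real^'n^'n"
  assumes "pos_def_matrix S"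
  shows "invertible S" "det S > 0"
proof -
  obtain P :: "real^'n^'n" where eq: "transpose P ** S ** P = mat 1" using pd_factor[OF assms] by blast
  show "det S > 0" using pd_factor_props(3)[OF eq] .
  then show "invertible S" by (simp add: invertible_det_nz)
qed

lemma pd_inv:
  fixes S :: "real^'n^'n"
  assumes pd: "pos_def_matrix S"
  shows "pos_def_matrix (matrix_inv S)"
proof -
  have inv: "invertible S" using pd_invertible[OF pd] by blast
  have sym: "transpose S = S" and pos: "\<And>x. x \<noteq> 0 \<Longrightarrow> x \<bullet> (S *v x) > 0"
    using pd unfolding pos_def_matrix_def by auto
  have "transpose (matrix_inv S) = matrix_inv S" using transpose_matrix_inv[OF inv] sym by simp
  moreover have "x \<bullet> (matrix_inv S *v x) > 0" if "x \<noteq> 0" for x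
  proof -
    define y where "y = matrix_inv S *v x"
    have xy: "x = S *v y" unfolding y_def using matrix_inv_vec[OF inv] by simp
    then have "y \<noteq> 0" using that by auto
    then have "y \<bullet> (S *v y) > 0" by (rule pos)
    moreover have e: "matrix_inv S *v x = y" unfolding y_def ..
    ultimately show ?thesis unfolding e by (metis xy inner_commute)
  qed
  ultimately show ?thesis unfolding pos_def_matrix_def by auto
qed

lemma pd_scale:
  fixes S :: "real^'n^'n"
  assumes pd: "pos_def_matrix S" and c: "c > 0"
  shows "pos_def_matrix (c *\<^sub>R S)"
  using assms unfolding pos_def_matrix_def
  by (auto simp: transpose_scalar scaleR_matrix_vector_assoc[symmetric])

lemma pd_add_id:
  fixes S :: "real^'n^'n"
  assumes pd: "pos_def_matrix S" and c: "c \<ge> 0"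
  shows "pos_def_matrix (S + c *\<^sub>R mat 1)"
  using assms unfolding pos_def_matrix_def
  by (auto simp: transpose_add' transpose_scalar matrix_vector_mult_add_rdistrib
      scaleR_matrix_vector_assoc[symmetric] inner_add_right add_pos_nonneg)

lemma pd_scale_add_id:
  fixes S :: "real^'n^'n"
  assumes pd: "pos_def_matrix S" and c: "c \<ge> 0"
  shows "pos_def_matrix (c *\<^sub>R S + mat 1)"
proof -
  have sym: "transpose S = S" and pos: "\<And>x. x \<noteq> 0 \<Longrightarrow> x \<bullet> (S *v x) > 0"
    using pd unfolding pos_def_matrix_def by auto
  have "x \<bullet> ((c *\<^sub>R S + mat 1) *v x) > 0" if "x \<noteq> 0" for x
  proof -
    have "x \<bullet> ((c *\<^sub>R S + mat 1) *v x) = c * (x \<bullet> (S *v x)) + x \<bullet> x"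
      by (simp add: matrix_vector_mult_add_rdistrib scaleR_matrix_vector_assoc[symmetric] inner_add_right)
    moreover have "c * (x \<bullet> (S *v x)) \<ge> 0" using pos[OF that] c by simp
    moreover have "x \<bullet> x > 0" using that by simp
    ultimately show ?thesis by linarith
  qed
  moreover have "transpose (c *\<^sub>R S + mat 1) = c *\<^sub>R S + mat 1"
    by (simp add: transpose_add' transpose_scalar sym)
  ultimately show ?thesis unfolding pos_def_matrix_def by auto
qed

lemma covC_value:
  fixes sigma2 u r :: real and lam h :: "real^'n" and Lam :: "real^'n^'n"
  assumes pd: "pos_def_matrix Lam" and r: "r > 0"
  shows "cov_C sigma2 lam Lam h u (sqrt r) = sigma2 * det (mat 1 + u\<^sup>2 *\<^sub>R Lam) powr (- 1 / 2)
     * exp (- ((h - u *\<^sub>R lam) \<bullet> (matrix_inv (u\<^sup>2 *\<^sub>R Lam + mat 1) *v (h - u *\<^sub>R lam))) / r)"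
proof -
  define S where "S = (r / 2) *\<^sub>R Lam"
  have Seq: "((sqrt r)\<^sup>2 / 2) *\<^sub>R Lam = S" using r by (simp add: S_def)
  have pdS: "pos_def_matrix S" unfolding S_def using pd_scale[OF pd, of "r/2"] r by simp
  have invS: "invertible S" and detS: "det S > 0" using pd_invertible[OF pdS] by auto
  define Si where "Si = matrix_inv S"
  have pdSi: "pos_def_matrix Si" unfolding Si_def by (rule pd_inv[OF pdS])
  define A where "A = u\<^sup>2 *\<^sub>R Lam + mat 1"
  have pdA: "pos_def_matrix A" unfolding A_def by (rule pd_scale_add_id[OF pd]) simp
  have invA: "invertible A" and detA: "det A > 0" using pd_invertible[OF pdA] by auto
  define k where "k = 2 * u\<^sup>2 / r"
  have k0: "k \<ge> 0" unfolding k_def using r by simp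
  define M where "M = Si + k *\<^sub>R mat 1"
  have pdM: "pos_def_matrix M" unfolding M_def by (rule pd_add_id[OF pdSi k0])
  have detM: "det M > 0" using pd_invertible[OF pdM] by auto
  define m where "m = h - u *\<^sub>R lam"
  define b where "b = (2 * u / r) *\<^sub>R m"
  define c where "c = matrix_inv A *v (S *v b)"
  have LamS: "Lam *v z = (2 / r) *\<^sub>R (S *v z)" for z
    unfolding S_def using r by (simp add: scaleR_matrix_vector_assoc[symmetric])
  have Az: "A *v z = k *\<^sub>R (S *v z) + z" for z
    unfolding A_def k_def using r
    by (simp add: matrix_vector_mult_add_rdistrib scaleR_matrix_vector_assoc[symmetric] LamS)
  have SiS: "Si *v (S *v z) = z" for z unfolding Si_def using matrix_inv_vec[OF invS] by simp
  have Mz: "M *v z = Si *v z + k *\<^sub>R z" for z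
    unfolding M_def by (simp add: matrix_vector_mult_add_rdistrib scaleR_matrix_vector_assoc[symmetric])
  have Mc: "M *v c = b"
  proof -
    have "A *v c = S *v b" unfolding c_def using matrix_inv_vec[OF invA] by simp
    then have "c = S *v b - k *\<^sub>R (S *v c)" using Az[of c] by (simp add: algebra_simps)
    then have "Si *v c = Si *v (S *v b) - k *\<^sub>R (Si *v (S *v c))"
      by (metis matrix_vector_mult_diff_distrib matrix_vector_mult_scaleR)
    then have "Si *v c = b - k *\<^sub>R c" by (simp add: SiS)
    then show ?thesis by (simp add: Mz)
  qed
  define K where "K = sigma2 * (2 * pi) powr (- real CARD('n) / 2) * det S powr (- 1 / 2) * exp (- (m \<bullet> m) / r)"
  define G where "G = sqrt (2 * pi) ^ CARD('n) / sqrt (det M) * exp ((b \<bullet> c) / 2)"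
  have hG: "has_bochner_integral lborel (\<lambda>x. K * exp (- (x \<bullet> (M *v x)) / 2 + b \<bullet> x)) (K * G)"
    unfolding G_def by (intro has_bochner_integral_mult_right gauss_pd[OF pdM Mc])
  have pt: "mvn_density lam S (lam + x) * (sigma2 * exp (- (norm (h - u *\<^sub>R (lam + x)))\<^sup>2 / (sqrt r)\<^sup>2))
        = K * exp (- (x \<bullet> (M *v x)) / 2 + b \<bullet> x)" for x
  proof -
    have n2: "(norm (h - u *\<^sub>R (lam + x)))\<^sup>2 = m \<bullet> m - 2 * u * (m \<bullet> x) + u\<^sup>2 * (x \<bullet> x)"
    proof -
      have "h - u *\<^sub>R (lam + x) = m - u *\<^sub>R x" unfolding m_def by (simp add: algebra_simps)
      moreover have "(norm (m - u *\<^sub>R x))\<^sup>2 = (m - u *\<^sub>R x) \<bullet> (m - u *\<^sub>R x)"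
        by (rule power2_norm_eq_inner)
      moreover have "(m - u *\<^sub>R x) \<bullet> (m - u *\<^sub>R x) = m \<bullet> m - 2 * u * (m \<bullet> x) + u\<^sup>2 * (x \<bullet> x)"
        by (simp add: inner_diff_left inner_diff_right inner_commute power2_eq_square algebra_simps)
      ultimately show ?thesis by simp
    qed
    have ex: "- (x \<bullet> (Si *v x)) / 2 + - (m \<bullet> m - 2 * u * (m \<bullet> x) + u\<^sup>2 * (x \<bullet> x)) / r
        = (- (x \<bullet> (M *v x)) / 2 + b \<bullet> x) + - (m \<bullet> m) / r"
      using r by (simp add: Mz b_def k_def inner_add_right field_simps)
    have "mvn_density lam S (lam + x) * (sigma2 * exp (- (norm (h - u *\<^sub>R (lam + x)))\<^sup>2 / (sqrt r)\<^sup>2))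
        = sigma2 * (2 * pi) powr (- real CARD('n) / 2) * det S powr (- 1 / 2)
           * (exp (- (x \<bullet> (Si *v x)) / 2) * exp (- (m \<bullet> m - 2 * u * (m \<bullet> x) + u\<^sup>2 * (x \<bullet> x)) / r))"
      unfolding mvn_density_def Si_def using r by (simp add: n2)
    also have "\<dots> = sigma2 * (2 * pi) powr (- real CARD('n) / 2) * det S powr (- 1 / 2)
           * exp ((- (x \<bullet> (M *v x)) / 2 + b \<bullet> x) + - (m \<bullet> m) / r)"
      by (simp only: exp_add[symmetric] ex)
    also have "\<dots> = K * exp (- (x \<bullet> (M *v x)) / 2 + b \<bullet> x)"
      unfolding K_def exp_add[of "- (x \<bullet> (M *v x)) / 2 + b \<bullet> x" "- (m \<bullet> m) / r"] by (simp only: mult_ac)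
    finally show ?thesis .
  qed
  have "has_bochner_integral lborel (\<lambda>v. mvn_density lam S v * (sigma2 * exp (- (norm (h - u *\<^sub>R v))\<^sup>2 / (sqrt r)\<^sup>2))) (K * G)"
    using lborel_has_bochner_integral_translate_iff[of "\<lambda>v. mvn_density lam S v * (sigma2 * exp (- (norm (h - u *\<^sub>R v))\<^sup>2 / (sqrt r)\<^sup>2))" "K * G" lam]
      hG by (simp only: pt)
  then have cv: "cov_C sigma2 lam Lam h u (sqrt r) = K * G"
    unfolding cov_C_def mvn_expectation_def Seq by (rule has_bochner_integral_integral_eq)
  have f1: "(2 * pi) powr (- real CARD('n) / 2) * sqrt (2 * pi) ^ CARD('n) = 1"
  proof -
    have "sqrt (2 * pi) ^ CARD('n) = (2 * pi) powr (real CARD('n) / 2)"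
      by (simp add: powr_half_sqrt[symmetric] powr_realpow[symmetric] powr_powr)
    then show ?thesis by (simp add: powr_add[symmetric])
  qed
  have SM: "S ** M = mat 1 + u\<^sup>2 *\<^sub>R Lam"
  proof -
    have "S ** M = S ** Si + k *\<^sub>R S" unfolding M_def by (simp add: matrix_add_ldistrib matrix_scalar_ac)
    also have "\<dots> = mat 1 + u\<^sup>2 *\<^sub>R Lam"
      unfolding Si_def k_def S_def using matrix_inv_both(1)[OF invS] r by (simp add: S_def)
    finally show ?thesis .
  qed
  have f2: "det S powr (- 1 / 2) / sqrt (det M) = det (mat 1 + u\<^sup>2 *\<^sub>R Lam) powr (- 1 / 2)"
  proof -
    have "det (mat 1 + u\<^sup>2 *\<^sub>R Lam) = det S * det M" using SM by (metis det_mul)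
    then show ?thesis using detS detM
      by (simp add: powr_minus_divide powr_half_sqrt[symmetric] powr_mult powr_divide divide_simps)
  qed
  have kS: "k *\<^sub>R (matrix_inv A *v (S *v m)) = m - matrix_inv A *v m"
  proof -
    have "k *\<^sub>R (S *v m) = A *v m - m" using Az[of m] by simp
    then have "matrix_inv A *v (k *\<^sub>R (S *v m)) = matrix_inv A *v (A *v m) - matrix_inv A *v m"
      by (simp add: matrix_vector_mult_diff_distrib)
    then show ?thesis using matrix_inv_vec[OF invA] by (simp add: matrix_vector_mult_scaleR)
  qed
  have f3: "exp (- (m \<bullet> m) / r) * exp ((b \<bullet> c) / 2) = exp (- (m \<bullet> (matrix_inv A *v m)) / r)"
  proof -
    have "b \<bullet> c = (2 / r) * (m \<bullet> (k *\<^sub>R (matrix_inv A *v (S *v m))))"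
      unfolding b_def c_def k_def using r
      by (simp add: matrix_vector_mult_scaleR power2_eq_square field_simps)
    also have "\<dots> = (2 / r) * (m \<bullet> m - m \<bullet> (matrix_inv A *v m))" by (simp add: kS inner_diff_right)
    finally have E: "b \<bullet> c = (2 / r) * (m \<bullet> m - m \<bullet> (matrix_inv A *v m))" .
    have "- (m \<bullet> m) / r + (b \<bullet> c) / 2 = - (m \<bullet> (matrix_inv A *v m)) / r"
      unfolding E using r by (simp add: field_simps)
    then show ?thesis by (simp only: exp_add[symmetric])
  qed
  have "K * G = sigma2 * ((2 * pi) powr (- real CARD('n) / 2) * sqrt (2 * pi) ^ CARD('n))
      * (det S powr (- 1 / 2) / sqrt (det M)) * (exp (- (m \<bullet> m) / r) * exp ((b \<bullet> c) / 2))"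
    unfolding K_def G_def by (simp add: field_simps)
  also have "\<dots> = sigma2 * det (mat 1 + u\<^sup>2 *\<^sub>R Lam) powr (- 1 / 2) * exp (- (m \<bullet> (matrix_inv A *v m)) / r)"
    by (simp only: f1 f2 f3 mult_1_right)
  finally show ?thesis unfolding cv m_def A_def .
qed

lemma cosh_real_measurable[measurable]: "(cosh :: real \<Rightarrow> real) \<in> borel_measurable borel"
proof -
  have "continuous_on UNIV (\<lambda>x::real. cosh x)" by (intro continuous_intros)
  then show ?thesis by (rule borel_measurable_continuous_onI)
qed

lemma cosh_ge_sq: "cosh (t::real) \<ge> t\<^sup>2 / 4"
proof -
  have e: "exp \<bar>t\<bar> \<le> exp t + exp (- t)"
    by (cases "t \<ge> 0") (auto simp: add_increasing add_increasing2 less_imp_le)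
  have "1 + \<bar>t\<bar> + \<bar>t\<bar>\<^sup>2 / 2 \<le> exp \<bar>t\<bar>" by (rule exp_lower_Taylor_quadratic) simp
  then have "t\<^sup>2 / 2 \<le> exp \<bar>t\<bar>" by simp
  then show ?thesis using e by (simp add: cosh_def)
qed

lemma cosh_le_exp_abs: "cosh (x::real) \<le> exp \<bar>x\<bar>"
  unfolding cosh_def by (cases "x \<ge> 0") auto

lemma abs_sinh_le_exp_abs: "\<bar>sinh (x::real)\<bar> \<le> exp \<bar>x\<bar>"
proof -
  have a: "exp x \<le> exp \<bar>x\<bar>" "exp (- x) \<le> exp \<bar>x\<bar>" by auto
  have b: "exp x > 0" "exp (- x) > 0" by auto
  have "\<bar>exp x - exp (- x)\<bar> \<le> 2 * exp \<bar>x\<bar>" unfolding abs_le_iff using a b by (intro conjI; linarith)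
  then show ?thesis unfolding sinh_def by simp
qed

lemma bessel_bound:
  fixes s p t :: real
  assumes s: "s > 0"
  shows "exp (\<bar>p\<bar> * \<bar>t\<bar>) * exp (- s * cosh t) \<le> exp (2 * p\<^sup>2 / s) * exp (- s * t\<^sup>2 / 8)"
proof -
  have "\<bar>p\<bar> * \<bar>t\<bar> - s * cosh t \<le> \<bar>p\<bar> * \<bar>t\<bar> - s * (t\<^sup>2 / 4)"
    using cosh_ge_sq[of t] s by (simp add: mult_left_mono)
  also have "\<dots> \<le> 2 * p\<^sup>2 / s - s * t\<^sup>2 / 8"
  proof -
    have "0 \<le> (s * \<bar>t\<bar> - 4 * \<bar>p\<bar>)\<^sup>2" by simp
    then have "8 * s * (\<bar>p\<bar> * \<bar>t\<bar>) \<le> 16 * p\<^sup>2 + s\<^sup>2 * t\<^sup>2"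
      by (simp add: power2_eq_square algebra_simps)
    then show ?thesis using s by (simp add: field_simps power2_eq_square)
  qed
  finally show ?thesis by (simp add: exp_add[symmetric])
qed

lemma gauss_scaled_integrable:
  assumes s: "s > 0"
  shows "integrable lborel (\<lambda>t::real. exp (- s * t\<^sup>2 / 8))"
proof -
  have "integrable lborel (\<lambda>x::real. exp (- x\<^sup>2 / 2))"
    using gauss1_has_integral by (simp add: has_bochner_integral_iff)
  then have "integrable lborel (\<lambda>x::real. exp (- (0 + sqrt s / 2 * x)\<^sup>2 / 2))"
    by (rule lborel_integrable_real_affine) (use s in simp)
  moreover have "(\<lambda>x::real. exp (- (0 + sqrt s / 2 * x)\<^sup>2 / 2)) = (\<lambda>t. exp (- s * t\<^sup>2 / 8))"
  proof
    fix x :: real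
    have "(sqrt s / 2 * x)\<^sup>2 = s * x\<^sup>2 / 4" using s by (simp add: power_divide power_mult_distrib)
    then show "exp (- (0 + sqrt s / 2 * x)\<^sup>2 / 2) = exp (- s * x\<^sup>2 / 8)" by simp
  qed
  ultimately show ?thesis by simp
qed

lemma bessel_integrable:
  fixes s p :: real and F :: "real \<Rightarrow> real"
  assumes s: "s > 0" and F[measurable]: "F \<in> borel_measurable borel"
    and Fb: "\<And>t. \<bar>F t\<bar> \<le> exp (\<bar>p\<bar> * \<bar>t\<bar>)"
  shows "integrable lborel (\<lambda>t. exp (- s * cosh t) * F t)"
proof (rule Bochner_Integration.integrable_bound)
  show "integrable lborel (\<lambda>t. exp (2 * p\<^sup>2 / s) * exp (- s * t\<^sup>2 / 8))"
    by (intro integrable_mult_right gauss_scaled_integrable s)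
  show "(\<lambda>t. exp (- s * cosh t) * F t) \<in> borel_measurable lborel" by measurable
  show "AE t in lborel. norm (exp (- s * cosh t) * F t) \<le> norm (exp (2 * p\<^sup>2 / s) * exp (- s * t\<^sup>2 / 8))"
  proof (intro AE_I2)
    fix t :: real
    have "norm (exp (- s * cosh t) * F t) = exp (- s * cosh t) * \<bar>F t\<bar>" by (simp add: abs_mult)
    also have "\<dots> \<le> exp (- s * cosh t) * exp (\<bar>p\<bar> * \<bar>t\<bar>)" by (intro mult_left_mono Fb) simp
    also have "\<dots> \<le> exp (2 * p\<^sup>2 / s) * exp (- s * t\<^sup>2 / 8)"
      using bessel_bound[OF s, of p t] by (simp add: mult.commute)
    finally show "norm (exp (- s * cosh t) * F t) \<le> norm (exp (2 * p\<^sup>2 / s) * exp (- s * t\<^sup>2 / 8))" by simp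
  qed
qed

lemma bessel_full_integral:
  fixes s p :: real
  assumes s: "s > 0"
  shows "has_bochner_integral lborel (\<lambda>t. exp (- s * cosh t) * exp (p * t)) (2 * besselK p s)"
proof -
  have mc: "(\<lambda>t::real. cosh (p * t)) \<in> borel_measurable borel"
    by (intro borel_measurable_continuous_onI continuous_intros)
  have ms: "(\<lambda>t::real. sinh (p * t)) \<in> borel_measurable borel"
    by (intro borel_measurable_continuous_onI continuous_intros)
  have ic: "integrable lborel (\<lambda>t. exp (- s * cosh t) * cosh (p * t))"
    by (rule bessel_integrable[OF s mc]) (use cosh_le_exp_abs[of "p * _"] in \<open>simp add: abs_mult\<close>)
  have is': "integrable lborel (\<lambda>t. exp (- s * cosh t) * sinh (p * t))"
    by (rule bessel_integrable[OF s ms]) (use abs_sinh_le_exp_abs[of "p * _"] in \<open>simp add: abs_mult\<close>)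
  have ic0: "integrable lborel (\<lambda>t. indicator {0..} t *\<^sub>R (exp (- s * cosh t) * cosh (p * t)))"
    using ic by (intro integrable_mult_indicator) auto
  have is0: "integrable lborel (\<lambda>t. indicator {0..} t *\<^sub>R (exp (- s * cosh t) * sinh (p * t)))"
    using is' by (intro integrable_mult_indicator) auto
  have hc0: "has_bochner_integral lborel (\<lambda>t. indicator {0..} t *\<^sub>R (exp (- s * cosh t) * cosh (p * t))) (besselK p s)"
    using ic0 unfolding besselK_def set_lebesgue_integral_def by (simp add: has_bochner_integral_iff)
  have hc: "has_bochner_integral lborel (\<lambda>t. exp (- s * cosh t) * cosh (p * t)) (2 *\<^sub>R besselK p s)"
    by (rule has_bochner_integral_even_function[OF hc0]) simp
  have hs: "has_bochner_integral lborel (\<lambda>t. exp (- s * cosh t) * sinh (p * t)) 0"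
    by (rule has_bochner_integral_odd_function[OF has_bochner_integral_integrable[OF is0]]) simp
  have "has_bochner_integral lborel (\<lambda>t. exp (- s * cosh t) * cosh (p * t) + exp (- s * cosh t) * sinh (p * t)) (2 *\<^sub>R besselK p s + 0)"
    by (rule has_bochner_integral_add[OF hc hs])
  moreover have "(\<lambda>t. exp (- s * cosh t) * cosh (p * t) + exp (- s * cosh t) * sinh (p * t)) = (\<lambda>t. exp (- s * cosh t) * exp (p * t))"
    by (auto simp: distrib_left[symmetric] cosh_plus_sinh)
  ultimately show ?thesis by simp
qed

lemma lborel_to_abs_int:
  fixes T :: "real \<Rightarrow> real"
  assumes h: "has_bochner_integral lborel T I"
  shows "T absolutely_integrable_on UNIV \<and> integral UNIV T = I"
proof -
  have iT: "integrable lborel T" and eT: "integral\<^sup>L lborel T = I" using h by (auto simp: has_bochner_integral_iff)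
  have mT: "T \<in> borel_measurable lborel" using iT by (rule borel_measurable_integrable)
  have "integrable lebesgue T" using iT mT by (simp add: integrable_completion)
  then have "T absolutely_integrable_on UNIV" by (simp add: set_integrable_def)
  moreover have "integral UNIV T = I" using integral_lborel[OF iT] eT by simp
  ultimately show ?thesis by blast
qed

lemma abs_int_to_lborel:
  fixes f :: "real \<Rightarrow> real"
  assumes h: "f absolutely_integrable_on A \<and> integral A f = I"
    and m: "(\<lambda>x. indicator A x *\<^sub>R f x) \<in> borel_measurable borel"
  shows "has_bochner_integral lborel (\<lambda>x. indicator A x *\<^sub>R f x) I"
proof -
  have si: "set_integrable lebesgue A f" using h by simp
  then have "integrable lebesgue (\<lambda>x. indicator A x *\<^sub>R f x)" by (simp add: set_integrable_def)
  then have i: "integrable lborel (\<lambda>x. indicator A x *\<^sub>R f x)" using m by (simp add: integrable_completion)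
  have "(LINT x:A | lebesgue. f x) = integral A f" by (rule set_lebesgue_integral_eq_integral(2)[OF si])
  then have "integral\<^sup>L lebesgue (\<lambda>x. indicator A x *\<^sub>R f x) = I" using h by (simp add: set_lebesgue_integral_def)
  then have "integral\<^sup>L lborel (\<lambda>x. indicator A x *\<^sub>R f x) = I" using m by (simp add: integral_completion)
  then show ?thesis using i by (simp add: has_bochner_integral_iff)
qed

lemma gig_kernel_integral:
  fixes a b p :: real
  assumes a: "a > 0" and b: "b > 0"
  shows "has_bochner_integral lborel (\<lambda>x. if x > 0 then x powr (p - 1) * exp (- (a * x + b / x) / 2) else 0)
           (2 * (b / a) powr (p / 2) * besselK p (sqrt (a * b)))"
proof -
  define k where "k = sqrt (b / a)"
  define s where "s = sqrt (a * b)"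
  have k: "k > 0" unfolding k_def using a b by simp
  have s: "s > 0" unfolding s_def using a b by simp
  have ak: "a * k = s"
  proof -
    have e: "a * b = (a * a) * (b / a)" using a by (simp add: field_simps)
    have "sqrt (a * b) = sqrt (a * a) * sqrt (b / a)" unfolding e by (rule real_sqrt_mult)
    then show ?thesis unfolding k_def s_def using a by simp
  qed
  have bk: "b / k = s" unfolding k_def s_def using a b
    by (simp add: real_sqrt_divide field_simps real_sqrt_mult)
  define f where "f x = x powr (p - 1) * exp (- (a * x + b / x) / 2)" for x :: real
  define T where "T t = k powr p * (exp (- s * cosh t) * exp (p * t))" for t :: real
  have hT: "has_bochner_integral lborel T (k powr p * (2 * besselK p s))"
    unfolding T_def by (intro has_bochner_integral_mult_right bessel_full_integral s)
  have pt: "\<bar>k * exp t\<bar> *\<^sub>R f (k * exp t) = T t" for t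
  proof -
    have pos: "k * exp t > 0" using k by simp
    have "\<bar>k * exp t\<bar> * (k * exp t) powr (p - 1) = (k * exp t) powr p"
      using pos by (simp add: powr_diff field_simps)
    also have "\<dots> = k powr p * exp (p * t)"
      using k by (simp add: powr_mult exp_powr_real mult.commute)
    finally have e1: "\<bar>k * exp t\<bar> * (k * exp t) powr (p - 1) = k powr p * exp (p * t)" .
    have "a * (k * exp t) + b / (k * exp t) = s * exp t + s * exp (- t)"
      using ak bk k by (simp add: exp_minus field_simps)
    then have e2: "- (a * (k * exp t) + b / (k * exp t)) / 2 = - s * cosh t"
      by (simp add: cosh_def field_simps)
    show ?thesis unfolding f_def T_def using e1 e2 by (simp add: mult_ac)
  qed
  have img: "range (\<lambda>t. k * exp t) = {0<..}"
  proof
    show "range (\<lambda>t. k * exp t) \<subseteq> {0<..}" using k by auto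
    show "{0<..} \<subseteq> range (\<lambda>t. k * exp t)"
    proof
      fix x :: real assume "x \<in> {0<..}"
      then have "x = k * exp (ln (x / k))" using k by simp
      then show "x \<in> range (\<lambda>t. k * exp t)" by blast
    qed
  qed
  have der: "((\<lambda>t. k * exp t) has_field_derivative k * exp t) (at t within UNIV)" for t
    by (auto intro!: derivative_eq_intros)
  have inj: "inj_on (\<lambda>t. k * exp t) UNIV" using k by (auto simp: inj_on_def)
  have "(\<lambda>t. \<bar>k * exp t\<bar> *\<^sub>R f (k * exp t)) absolutely_integrable_on UNIV \<and>
        integral UNIV (\<lambda>t. \<bar>k * exp t\<bar> *\<^sub>R f (k * exp t)) = k powr p * (2 * besselK p s)"
    unfolding pt using lborel_to_abs_int[OF hT] by (simp add: T_def[abs_def])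
  moreover have "((\<lambda>t. \<bar>k * exp t\<bar> *\<^sub>R f (k * exp t)) absolutely_integrable_on UNIV \<and>
        integral UNIV (\<lambda>t. \<bar>k * exp t\<bar> *\<^sub>R f (k * exp t)) = k powr p * (2 * besselK p s)) \<longleftrightarrow>
        (f absolutely_integrable_on (range (\<lambda>t. k * exp t)) \<and> integral (range (\<lambda>t. k * exp t)) f = k powr p * (2 * besselK p s))"
    by (rule has_absolute_integral_change_of_variables_real) (use der inj in auto)
  ultimately have "f absolutely_integrable_on {0<..} \<and> integral {0<..} f = k powr p * (2 * besselK p s)"
    unfolding img by blast
  then have "has_bochner_integral lborel (\<lambda>x. indicator {0<..} x *\<^sub>R f x) (k powr p * (2 * besselK p s))"
    by (rule abs_int_to_lborel) (simp add: f_def)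
  moreover have "(\<lambda>x. indicator {0<..} x *\<^sub>R f x) = (\<lambda>x. if x > 0 then x powr (p - 1) * exp (- (a * x + b / x) / 2) else 0)"
    by (auto simp: f_def indicator_def)
  moreover have "k powr p * (2 * besselK p s) = 2 * (b / a) powr (p / 2) * besselK p (sqrt (a * b))"
  proof -
    have "k powr p = (b / a) powr (p / 2)"
      unfolding k_def using a b by (simp add: powr_half_sqrt[symmetric] powr_powr)
    then show ?thesis unfolding s_def by simp
  qed
  ultimately show ?thesis by simp
qed

theorem mainTheorem6:
  fixes sigma2 p phi beta u :: real and lam h :: "real^'n" and Lam :: "real^'n^'n"
  assumes "sigma2 > 0" and "phi > 0" and "beta > 0" and "pos_def_matrix Lam"
  shows "cov_K sigma2 lam Lam p phi beta h u =
    (let hu = sqrt ((h - u *\<^sub>R lam) \<bullet> (matrix_inv (u\<^sup>2 *\<^sub>R Lam + mat 1) *v (h - u *\<^sub>R lam)))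
     in sigma2 * det (mat 1 + u\<^sup>2 *\<^sub>R Lam) powr (- 1 / 2)
        * (1 + hu\<^sup>2 / beta\<^sup>2) powr (p / 2) / besselK p (phi * beta)
        * besselK p (phi * sqrt (hu\<^sup>2 + beta\<^sup>2)))"
proof -
  note pd = assms(4)
  have phi: "phi > 0" and beta: "beta > 0" using assms by auto
  define A where "A = u\<^sup>2 *\<^sub>R Lam + mat 1"
  define m where "m = h - u *\<^sub>R lam"
  define q where "q = m \<bullet> (matrix_inv A *v m)"
  have pdA: "pos_def_matrix A" unfolding A_def by (rule pd_scale_add_id[OF pd]) simp
  have invA: "invertible A" using pd_invertible[OF pdA] by auto
  have pdAi: "pos_def_matrix (matrix_inv A)" by (rule pd_inv[OF pdA])
  have q0: "q \<ge> 0"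
  proof (cases "m = 0")
    case True then show ?thesis unfolding q_def by simp
  next
    case False then show ?thesis using pdAi unfolding q_def pos_def_matrix_def by (simp add: less_imp_le)
  qed
  define D where "D = det (mat 1 + u\<^sup>2 *\<^sub>R Lam) powr (- 1 / 2)"
  define a where "a = phi\<^sup>2 / 2"
  define b where "b = 2 * beta\<^sup>2"
  define b' where "b' = b + 2 * q"
  define c0 where "c0 = (a / b) powr (p / 2) / (2 * besselK p (sqrt (a * b)))"
  have a: "a > 0" unfolding a_def using phi by simp
  have b: "b > 0" unfolding b_def using beta by simp
  have b': "b' > 0" unfolding b'_def using b q0 by simp
  have pt: "gig_density p a b r * cov_C sigma2 lam Lam h u (sqrt r)
      = (sigma2 * D * c0) * (if r > 0 then r powr (p - 1) * exp (- (a * r + b' / r) / 2) else 0)" for r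
  proof (cases "r > 0")
    case True
    have cv: "cov_C sigma2 lam Lam h u (sqrt r) = sigma2 * D * exp (- q / r)"
      using covC_value[OF pd True, of sigma2 lam h u] unfolding D_def q_def m_def A_def by simp
    have ee: "exp (- (a * r + b / r) / 2) * exp (- q / r) = exp (- (a * r + b' / r) / 2)"
    proof -
      have "- (a * r + b / r) / 2 + - q / r = - (a * r + b' / r) / 2"
        unfolding b'_def using True by (simp add: field_simps)
      then show ?thesis by (simp only: exp_add[symmetric])
    qed
    have "gig_density p a b r * cov_C sigma2 lam Lam h u (sqrt r)
        = (sigma2 * D * c0) * (r powr (p - 1) * (exp (- (a * r + b / r) / 2) * exp (- q / r)))"
      unfolding gig_density_def c0_def cv using True by (simp add: mult_ac)
    also have "\<dots> = (sigma2 * D * c0) * (r powr (p - 1) * exp (- (a * r + b' / r) / 2))"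
      by (simp only: ee)
    finally show ?thesis using True by simp
  next
    case False
    then show ?thesis by (simp add: gig_density_def)
  qed
  have hk: "has_bochner_integral lborel (\<lambda>r. (sigma2 * D * c0) * (if r > 0 then r powr (p - 1) * exp (- (a * r + b' / r) / 2) else 0))
      ((sigma2 * D * c0) * (2 * (b' / a) powr (p / 2) * besselK p (sqrt (a * b'))))"
    by (intro has_bochner_integral_mult_right gig_kernel_integral a b')
  have K: "cov_K sigma2 lam Lam p phi beta h u = (sigma2 * D * c0) * (2 * (b' / a) powr (p / 2) * besselK p (sqrt (a * b')))"
    unfolding cov_K_def a_def[symmetric] b_def[symmetric] pt
    by (rule has_bochner_integral_integral_eq[OF hk])
  have s1: "sqrt (a * b) = phi * beta"
    unfolding a_def b_def using phi beta by (simp add: real_sqrt_mult power2_eq_square)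
  have s2: "sqrt (a * b') = phi * sqrt (q + beta\<^sup>2)"
  proof -
    have "a * b' = phi\<^sup>2 * (q + beta\<^sup>2)" unfolding a_def b'_def b_def by (simp add: field_simps)
    then show ?thesis using phi by (simp add: real_sqrt_mult)
  qed
  have s3: "(a / b) powr (p / 2) * (b' / a) powr (p / 2) = (1 + q / beta\<^sup>2) powr (p / 2)"
  proof -
    have "(a / b) powr (p / 2) * (b' / a) powr (p / 2) = ((a / b) * (b' / a)) powr (p / 2)"
      by (rule powr_mult[symmetric])
    also have "(a / b) * (b' / a) = 1 + q / beta\<^sup>2"
      unfolding b'_def b_def using a beta by (simp add: field_simps)
    finally show ?thesis .
  qed
  have hu2: "(sqrt q)\<^sup>2 = q" using q0 by simp
  have "cov_K sigma2 lam Lam p phi beta h u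
      = sigma2 * D * ((a / b) powr (p / 2) * (b' / a) powr (p / 2)) / besselK p (sqrt (a * b)) * besselK p (sqrt (a * b'))"
    unfolding K c0_def by (simp add: field_simps)
  also have "\<dots> = sigma2 * D * (1 + q / beta\<^sup>2) powr (p / 2) / besselK p (phi * beta) * besselK p (phi * sqrt (q + beta\<^sup>2))"
    by (simp only: s1 s2 s3)
  finally show ?thesis unfolding Let_def hu2 q_def[symmetric] m_def[symmetric] A_def[symmetric] D_def[symmetric]
    by simp
qed

end
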